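(* Let $\phi$ be a positive, trace-preserving linear map on $\mathcal M(d;\mathbb C)$ whose space of fixed points $\eta_\phi=\{X:\phi(X)=X\}$ has dimension strictly greater than $1$. Then $\phi$ admits a semipositive fixed point, i.e. a nonzero $A\ge 0$ with $\det A=0$ and $\phi(A)=A$.
   Context: A linear map is positive if it maps positive semidefinite matrices to positive semidefinite matrices. Every positive trace-preserving map has a positive semidefinite fixed point of unit trace, and it maps Hermitian matrices to Hermitian matrices. *)

theory Defs
  imports "HOL-Analysis.Analysis"
begin

text \<open>Complex d x d matrices are modelled as complex^'n^'n with 'n a finite index type
  (d = CARD('n)). Complex scalar multiplication of matrices:\<close>

definition mscale :: "complex \<Rightarrow> complex^'n^'n \<Rightarrow> complex^'n^'n" where
  "mscale c X = (\<chi> i j. c * X $ i $ j)"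

lemma vector_space_mscale: "vector_space mscale"
  by unfold_locales (simp_all add: mscale_def vec_eq_iff algebra_simps)

definition hermitian :: "complex^'n^'n \<Rightarrow> bool" where
  "hermitian A \<longleftrightarrow> (\<forall>i j. A $ i $ j = cnj (A $ j $ i))"

definition psd :: "complex^'n^'n \<Rightarrow> bool" where
  "psd A \<longleftrightarrow> hermitian A \<and>
     (\<forall>x :: complex^'n. 0 \<le> Re (\<Sum>i\<in>UNIV. \<Sum>j\<in>UNIV. cnj (x $ i) * A $ i $ j * x $ j))"

definition positive_map :: "(complex^'n^'n \<Rightarrow> complex^'n^'n) \<Rightarrow> bool" where
  "positive_map \<phi> \<longleftrightarrow> (\<forall>A. psd A \<longrightarrow> psd (\<phi> A))"

definition trace_preserving :: "(complex^'n^'n \<Rightarrow> complex^'n^'n) \<Rightarrow> bool" where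
  "trace_preserving \<phi> \<longleftrightarrow> (\<forall>X. trace (\<phi> X) = trace X)"

end

theory Submission
  imports Defs
begin

definition bil :: "complex^'n^'n \<Rightarrow> complex^'n \<Rightarrow> complex^'n \<Rightarrow> complex" where
  "bil A x y = (\<Sum>i\<in>UNIV. \<Sum>j\<in>UNIV. cnj (x$i) * A$i$j * y$j)"

lemma hermitianD: "hermitian A \<Longrightarrow> cnj (A$i$j) = A$j$i"
  unfolding hermitian_def by (metis complex_cnj_cnj)
lemma hermitianI: "(\<And>i j. A$i$j = cnj (A$j$i)) \<Longrightarrow> hermitian A"
  unfolding hermitian_def by blast

lemma psd_bil: "psd A \<longleftrightarrow> hermitian A \<and> (\<forall>x. 0 \<le> Re (bil A x x))"
  by (simp add: psd_def bil_def)

lemma mult_if0: "(x::complex) * (if P then a else 0) = (if P then x*a else 0)" by simp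
lemma if0_mult: "(if P then a else 0) * (x::complex) = (if P then a*x else 0)" by simp
lemma cnj_if0: "cnj (if P then a else 0) = (if P then cnj a else 0)" by simp

lemma bil_add_left: "bil A (x + y) z = bil A x z + bil A y z"
  by (simp add: bil_def algebra_simps sum.distrib)
lemma bil_add_right: "bil A z (x + y) = bil A z x + bil A z y"
  by (simp add: bil_def algebra_simps sum.distrib)
lemma bil_scale_left: "bil A (c *s x) z = cnj c * bil A x z"
  by (simp add: bil_def algebra_simps sum_distrib_left)
lemma bil_scale_right: "bil A z (c *s x) = c * bil A z x"
  by (simp add: bil_def algebra_simps sum_distrib_left)
lemma bil_mat_add: "bil (A + B) x y = bil A x y + bil B x y"
  by (simp add: bil_def algebra_simps sum.distrib)
lemma bil_mat_diff: "bil (A - B) x y = bil A x y - bil B x y"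
  by (simp add: bil_def algebra_simps sum_subtractf)
lemma scaleR_mat_nth: "(r *\<^sub>R (A::complex^'n^'n))$i$j = of_real r * A$i$j"
  unfolding vector_scaleR_component by (simp add: scaleR_conv_of_real)
lemma scaleR_vec_nth': "(r *\<^sub>R (x::complex^'n))$i = of_real r * x$i"
  unfolding vector_scaleR_component by (simp add: scaleR_conv_of_real)
lemma bil_mat_scaleR: "bil (r *\<^sub>R A) x y = of_real r * bil A x y"
  by (simp add: bil_def scaleR_mat_nth sum_distrib_left algebra_simps del: vector_scaleR_component)
lemma bil_mscale: "bil (mscale c A) x y = c * bil A x y"
  by (simp add: bil_def mscale_def algebra_simps sum_distrib_left)
lemma bil_mat: fixes x :: "complex^'n" shows "bil (mat c) x x = c * (\<Sum>i\<in>UNIV. cnj (x$i) * x$i)"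
proof -
  have "\<And>i::'n. (\<Sum>j\<in>UNIV. cnj (x$i) * (mat c :: complex^'n^'n)$i$j * x$j) = c * (cnj (x$i) * x$i)"
  proof -
    fix i
    have "(\<Sum>j\<in>UNIV. cnj (x$i) * (mat c :: complex^'n^'n)$i$j * x$j)
        = (\<Sum>j\<in>UNIV. if j = i then c * (cnj (x$i) * x$i) else 0)"
      by (rule sum.cong) (auto simp: mat_def)
    then show "?thesis i" by simp
  qed
  then show ?thesis by (simp add: bil_def sum_distrib_left)
qed
lemma bil_herm: assumes "hermitian A" shows "bil A y x = cnj (bil A x y)"
proof -
  have h: "cnj (A$i$j) = A$j$i" for i j using assms by (rule hermitianD)
  have "cnj (bil A x y) = (\<Sum>i\<in>UNIV. \<Sum>j\<in>UNIV. x$i * A$j$i * cnj (y$j))"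
    unfolding bil_def cnj_sum complex_cnj_mult complex_cnj_cnj h ..
  also have "\<dots> = (\<Sum>j\<in>UNIV. \<Sum>i\<in>UNIV. x$i * A$j$i * cnj (y$j))"
    by (rule sum.swap)
  also have "\<dots> = bil A y x"
    unfolding bil_def by (intro sum.cong refl) (simp only: mult.commute mult.left_commute)
  finally show ?thesis by simp
qed
lemma bil_axis: "bil A (axis i a) (axis j b) = cnj a * A$i$j * b"
  unfolding bil_def axis_def by (simp add: mult_if0 if0_mult cnj_if0)
lemma bil_mv: "bil A y x = (\<Sum>i\<in>UNIV. cnj (y$i) * (A *v x)$i)"
  by (simp add: bil_def matrix_vector_mult_def sum_distrib_left algebra_simps)

lemma bil_quad_add: "bil A (x + y) (x + y) = bil A x x + bil A y y + bil A x y + bil A y x"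
  by (simp add: bil_add_left bil_add_right algebra_simps)

lemma herm_diag_real: "hermitian A \<Longrightarrow> A$i$i = of_real (Re (A$i$i))"
  unfolding hermitian_def by (metis complex_is_Real_iff Reals_cnj_iff of_real_Re)

lemma psd_diag: assumes "psd A" shows "0 \<le> Re (A$i$i)"
proof -
  have "0 \<le> Re (bil A (axis i 1) (axis i 1))" using assms by (simp add: psd_bil)
  then show ?thesis by (simp add: bil_axis)
qed

lemma psd_offdiag: assumes "psd A" shows "2 * cmod (A$i$j) \<le> Re (A$i$i) + Re (A$j$j)"
proof (cases "A$i$j = 0")
  case True then show ?thesis using psd_diag[OF assms, of i] psd_diag[OF assms, of j] by simp
next
  case False
  define a where "a = A$i$j"
  define u where "u = cnj a / of_real (cmod a)"
  have au: "a * u = of_real (cmod a)" using False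
  proof -
    have n: "cmod a \<noteq> 0" using False by (simp add: a_def)
    have "a * u = (a * cnj a) / of_real (cmod a)" by (simp add: u_def)
    also have "\<dots> = of_real ((cmod a)^2) / of_real (cmod a)" by (simp only: complex_norm_square)
    also have "\<dots> = of_real (cmod a)" using n by (simp add: power2_eq_square)
    finally show ?thesis .
  qed
  have uu: "cnj u * u = 1" using False
  proof -
    have n: "cmod a \<noteq> 0" using False by (simp add: a_def)
    have "cnj u * u = (a * cnj a) / (of_real (cmod a) * of_real (cmod a))" by (simp add: u_def)
    also have "\<dots> = of_real ((cmod a)^2) / of_real ((cmod a)^2)" by (metis complex_norm_square of_real_mult power2_eq_square)
    also have "\<dots> = 1" using n by simp
    finally show ?thesis .
  qed
  have herm: "hermitian A" using assms by (simp add: psd_def)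
  let ?x = "axis i (1::complex)" and ?y = "axis j (- u)"
  have "0 \<le> Re (bil A (?x + ?y) (?x + ?y))" using assms by (simp add: psd_bil)
  also have "bil A (?x + ?y) (?x + ?y) = A$i$i + cnj u * u * A$j$j + bil A ?x ?y + cnj (bil A ?x ?y)"
    unfolding bil_quad_add bil_herm[OF herm, of ?y ?x] by (simp add: bil_axis algebra_simps)
  also have "bil A ?x ?y = - of_real (cmod a)" by (simp add: bil_axis a_def[symmetric] au[symmetric])
  finally show ?thesis using uu by (simp add: a_def)
qed

lemma psd_kernel: fixes A :: "complex^'n^'n" assumes "psd A" and q0: "Re (bil A x x) = 0" shows "A *v x = 0"
proof -
  define y where "y = A *v x"
  define b where "b = Re (bil A y x)"
  have herm: "hermitian A" using assms by (simp add: psd_def)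
  have bdef: "bil A y x = (\<Sum>i\<in>UNIV. of_real ((cmod (y$i))^2))"
    unfolding bil_mv y_def[symmetric] by (rule sum.cong) (simp_all only: complex_norm_square mult.commute)
  then have bre: "bil A y x = of_real b" by (simp add: b_def Re_sum)
  have b0: "0 \<le> b" using bdef by (simp add: b_def Re_sum sum_nonneg)
  define Q where "Q = Re (bil A y y)"
  have Q0: "0 \<le> Q" using assms by (simp add: psd_bil Q_def)
  define t where "t = 1 / (Q + 1)"
  have t0: "0 < t" using Q0 by (simp add: t_def)
  have tQ: "t * Q < 1" using Q0 by (simp add: t_def field_simps)
  define s where "s = - (t * b)"
  have "0 \<le> Re (bil A (x + (of_real s) *s y) (x + (of_real s) *s y))" using assms by (simp add: psd_bil)
  also have "bil A (x + (of_real s) *s y) (x + (of_real s) *s y)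
      = bil A x x + of_real (s^2) * bil A y y + of_real s * cnj (bil A y x) + of_real s * bil A y x"
    unfolding bil_quad_add bil_scale_left bil_scale_right bil_herm[OF herm, of x y]
    by (simp add: power2_eq_square algebra_simps)
  also have "Re \<dots> = Re (bil A x x) + s^2 * Q + 2 * s * b"
    by (simp add: bre Q_def)
  finally have "0 \<le> s^2 * Q + 2 * s * b" using q0 by simp
  then have "0 \<le> t^2 * b^2 * Q - 2 * t * b^2" by (simp add: s_def power2_eq_square algebra_simps)
  then have "0 \<le> t * b^2 * (t * Q - 2)" by (simp add: power2_eq_square algebra_simps)
  moreover have neg: "t * Q - 2 < 0" using tQ by simp
  moreover have tb: "0 \<le> t * b^2" using t0 by simp
  ultimately have "t * b^2 * (t * Q - 2) = 0" using mult_nonneg_nonpos[of "t * b^2" "t * Q - 2"] by linarith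
  then have "t * b^2 = 0" using neg by simp
  then have "b = 0" using t0 by simp
  moreover have "(\<Sum>i\<in>UNIV. (cmod (y$i))^2) = b"
  proof -
    have "complex_of_real (\<Sum>i\<in>UNIV. (cmod (y$i))^2) = of_real b"
      by (simp only: of_real_sum bdef[symmetric] bre)
    then show ?thesis by (simp only: of_real_eq_iff)
  qed
  ultimately have "(\<Sum>i\<in>UNIV. (cmod (y$i))^2) = 0" by simp
  then have "\<forall>i\<in>UNIV. (cmod (y$i))^2 = 0"
    using sum_nonneg_eq_0_iff[of "UNIV::'n set" "\<lambda>i. (cmod (y$i))^2"] by simp
  then have "y = 0" by (simp add: vec_eq_iff)
  then show ?thesis by (simp only: y_def)
qed

lemma trace_add: "trace (A + B) = trace A + trace (B::complex^'n^'n)"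
  by (simp add: trace_def sum.distrib)
lemma trace_diff: "trace (A - B) = trace A - trace (B::complex^'n^'n)"
  by (simp add: trace_def sum_subtractf)
lemma trace_scaleR: "trace (r *\<^sub>R (A::complex^'n^'n)) = of_real r * trace A"
  by (simp add: trace_def scaleR_mat_nth sum_distrib_left del: vector_scaleR_component)
lemma trace_mscale: "trace (mscale c (A::complex^'n^'n)) = c * trace A"
  by (simp add: trace_def mscale_def sum_distrib_left)

lemma hermitian_add: "hermitian A \<Longrightarrow> hermitian B \<Longrightarrow> hermitian (A + B)"
  by (intro hermitianI) (simp add: hermitianD)
lemma hermitian_diff: "hermitian A \<Longrightarrow> hermitian B \<Longrightarrow> hermitian (A - B)"
  by (intro hermitianI) (simp add: hermitianD)
lemma hermitian_scaleR: "hermitian A \<Longrightarrow> hermitian (r *\<^sub>R A)"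
  by (intro hermitianI) (simp add: hermitianD scaleR_mat_nth del: vector_scaleR_component)
lemma hermitian_mat: "hermitian (mat (of_real r))"
  by (intro hermitianI) (simp add: mat_def)

lemma bil_real: "hermitian A \<Longrightarrow> bil A x x = of_real (Re (bil A x x))"
  using bil_herm[of A x x] by (metis complex_is_Real_iff Reals_cnj_iff of_real_Re)

lemma trace_herm_real: "hermitian A \<Longrightarrow> trace A = of_real (\<Sum>i\<in>UNIV. Re (A$i$i))"
  unfolding trace_def of_real_sum by (rule sum.cong) (auto intro: herm_diag_real)

definition dens :: "(complex^'n^'n) set" where "dens = {A. psd A \<and> trace A = 1}"

lemma dens_entry_bound: assumes "A \<in> dens" shows "cmod (A$i$j) \<le> 1"
proof -
  have p: "psd A" and t: "trace A = 1" using assms by (auto simp: dens_def)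
  have h: "hermitian A" using p by (simp add: psd_def)
  have s1: "(\<Sum>k\<in>UNIV. Re (A$k$k)) = 1" using trace_herm_real[OF h] t
    by (metis of_real_eq_1_iff)
  have le: "Re (A$k$k) \<le> 1" for k
  proof -
    have "Re (A$k$k) \<le> (\<Sum>k\<in>UNIV. Re (A$k$k))"
      by (rule member_le_sum) (auto intro: psd_diag[OF p])
    then show ?thesis using s1 by simp
  qed
  show ?thesis using psd_offdiag[OF p, of i j] le[of i] le[of j] by simp
qed

lemma norm_mat_le: "norm (A::complex^'n^'n) \<le> (\<Sum>i\<in>UNIV. \<Sum>j\<in>UNIV. cmod (A$i$j))"
proof -
  have "norm A \<le> (\<Sum>i\<in>UNIV. norm (A$i))" by (simp add: norm_vec_def L2_set_le_sum)
  also have "\<dots> \<le> (\<Sum>i\<in>UNIV. \<Sum>j\<in>UNIV. cmod (A$i$j))"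
    by (rule sum_mono) (simp add: norm_vec_def L2_set_le_sum)
  finally show ?thesis .
qed

lemma dens_norm_bound: fixes A :: "complex^'n^'n" assumes "A \<in> dens" shows "norm A \<le> real (CARD('n)) * real (CARD('n))"
proof -
  have "norm A \<le> (\<Sum>i\<in>(UNIV::'n set). \<Sum>j\<in>(UNIV::'n set). 1)"
  proof -
    have "(\<Sum>i\<in>UNIV. \<Sum>j\<in>UNIV. cmod (A$i$j)) \<le> (\<Sum>i\<in>(UNIV::'n set). \<Sum>j\<in>(UNIV::'n set). (1::real))"
      by (intro sum_mono) (rule dens_entry_bound[OF assms])
    then show ?thesis using norm_mat_le[of A] by linarith
  qed
  then show ?thesis by simp
qed

lemma bounded_dens: "bounded (dens :: (complex^'n^'n) set)"
  unfolding bounded_iff using dens_norm_bound by blast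

lemma cont_bil: "continuous_on UNIV (\<lambda>A::complex^'n^'n. bil A x y)"
  unfolding bil_def by (intro continuous_intros)
lemma cont_trace: "continuous_on UNIV (\<lambda>A::complex^'n^'n. trace A)"
  unfolding trace_def by (intro continuous_intros)
lemma cont_entry: "continuous_on UNIV (\<lambda>A::complex^'n^'n. A$i$j)"
  by (intro continuous_intros)

lemma closed_dens: "closed (dens :: (complex^'n^'n) set)"
proof -
  have eq: "dens = (\<Inter>i. \<Inter>j. {A::complex^'n^'n. A$i$j = cnj (A$j$i)}) \<inter>
      (\<Inter>x. {A. 0 \<le> Re (bil A x x)}) \<inter> {A. trace A = 1}"
    unfolding dens_def psd_bil hermitian_def by blast
  have c1: "closed {A::complex^'n^'n. A$i$j = cnj (A$j$i)}" for i j
    by (rule closed_Collect_eq[OF cont_entry continuous_on_cnj[OF cont_entry]])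
  have c2: "closed {A::complex^'n^'n. 0 \<le> Re (bil A x x)}" for x
    by (rule closed_Collect_le[OF continuous_on_const continuous_on_Re[OF cont_bil]])
  have c3: "closed {A::complex^'n^'n. trace A = 1}"
    by (rule closed_Collect_eq[OF cont_trace continuous_on_const])
  have "closed (\<Inter>i. \<Inter>j. {A::complex^'n^'n. A$i$j = cnj (A$j$i)})"
    by (intro closed_INT ballI c1)
  moreover have "closed (\<Inter>x. {A::complex^'n^'n. 0 \<le> Re (bil A x x)})"
    by (intro closed_INT ballI c2)
  ultimately show ?thesis unfolding eq using c3 by (intro closed_Int)
qed

lemma compact_dens: "compact (dens :: (complex^'n^'n) set)"
  using bounded_dens closed_dens by (simp add: compact_eq_bounded_closed)

lemma convex_dens: "convex (dens :: (complex^'n^'n) set)"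
  unfolding convex_def
proof (intro ballI allI impI)
  fix A B :: "complex^'n^'n" and u v :: real
  assume A: "A \<in> dens" and B: "B \<in> dens" and uv: "0 \<le> u" "0 \<le> v" "u + v = 1"
  have pA: "psd A" "trace A = 1" and pB: "psd B" "trace B = 1" using A B by (auto simp: dens_def)
  have "hermitian (u *\<^sub>R A + v *\<^sub>R B)" using pA pB
    by (intro hermitian_add hermitian_scaleR) (auto simp: psd_def)
  moreover have "0 \<le> Re (bil (u *\<^sub>R A + v *\<^sub>R B) x x)" for x
  proof -
    have "0 \<le> Re (bil A x x)" "0 \<le> Re (bil B x x)" using pA pB by (auto simp: psd_bil)
    then show ?thesis using uv by (simp add: bil_mat_add bil_mat_scaleR)
  qed
  moreover have "trace (u *\<^sub>R A + v *\<^sub>R B) = 1" using pA pB uv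
    by (simp add: trace_add trace_scaleR) (metis of_real_add of_real_1)
  ultimately show "u *\<^sub>R A + v *\<^sub>R B \<in> dens" by (simp add: dens_def psd_bil)
qed

lemma dens_nonempty: "mat (of_real (1 / real CARD('n))) \<in> (dens :: (complex^'n^'n) set)"
proof -
  let ?M = "mat (of_real (1 / real CARD('n))) :: complex^'n^'n"
  have "0 \<le> Re (bil ?M x x)" for x
  proof -
    have "(\<Sum>i\<in>UNIV. cnj (x$i) * x$i) = of_real (\<Sum>i\<in>UNIV. (cmod (x$i))^2)"
      unfolding of_real_sum by (rule sum.cong) (simp_all only: complex_norm_square mult.commute)
    then show ?thesis by (simp add: bil_mat sum_nonneg)
  qed
  moreover have "trace ?M = 1" by (simp add: trace_def mat_def)
  moreover have "hermitian ?M" by (intro hermitianI) (simp add: mat_def)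
  ultimately show ?thesis by (simp add: dens_def psd_bil)
qed

lemma vecI: "(\<And>i. x$i = y$i) \<Longrightarrow> x = y" by (simp add: vec_eq_iff)

lemma scaleR_mscale: "r *\<^sub>R (X::complex^'n^'n) = mscale (of_real r) X"
  unfolding mscale_def by (rule vecI, rule vecI) (simp add: scaleR_mat_nth del: vector_scaleR_component)

lemma real_linear:
  assumes "Vector_Spaces.linear mscale mscale (\<phi> :: complex^'n^'n \<Rightarrow> complex^'n^'n)"
  shows "linear \<phi>"
proof -
  interpret L: Vector_Spaces.linear mscale mscale \<phi> by (rule assms)
  show ?thesis
    by (rule linearI) (simp_all add: L.add scaleR_mscale L.scale)
qed

lemma sq_sum_bound: "(cmod (x$i)) * (cmod (x$j)) \<le> (\<Sum>k\<in>UNIV. (cmod (x$k))^2)"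
proof -
  have a: "(cmod (x$i))^2 \<le> (\<Sum>k\<in>UNIV. (cmod (x$k))^2)" by (rule member_le_sum) auto
  have b: "(cmod (x$j))^2 \<le> (\<Sum>k\<in>UNIV. (cmod (x$k))^2)" by (rule member_le_sum) auto
  have "2 * ((cmod (x$i)) * (cmod (x$j))) \<le> (cmod (x$i))^2 + (cmod (x$j))^2"
    using zero_le_power2[of "cmod (x$i) - cmod (x$j)"] unfolding power2_diff by linarith
  then show ?thesis using a b by linarith
qed

lemma sum_cnj_self: "(\<Sum>i\<in>UNIV. cnj (x$i) * x$i) = of_real (\<Sum>i\<in>UNIV. (cmod ((x::complex^'n)$i))^2)"
  unfolding of_real_sum by (rule sum.cong) (simp_all only: complex_norm_square mult.commute)

lemma bil_bound: "cmod (bil A x x) \<le> (\<Sum>i\<in>UNIV. \<Sum>j\<in>UNIV. cmod (A$i$j)) * (\<Sum>k\<in>UNIV. (cmod ((x::complex^'n)$k))^2)"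
proof -
  let ?N = "\<Sum>k\<in>UNIV. (cmod ((x::complex^'n)$k))^2"
  have "cmod (bil A x x) \<le> (\<Sum>i\<in>UNIV. \<Sum>j\<in>UNIV. cmod (cnj (x$i) * A$i$j * x$j))"
    unfolding bil_def by (rule order_trans[OF norm_sum sum_mono]) (rule norm_sum)
  also have "\<dots> \<le> (\<Sum>i\<in>UNIV. \<Sum>j\<in>UNIV. cmod (A$i$j) * ?N)"
  proof (intro sum_mono)
    fix i j
    have "cmod (cnj (x$i) * A$i$j * x$j) = cmod (A$i$j) * ((cmod (x$i)) * (cmod (x$j)))"
      by (simp add: norm_mult)
    also have "\<dots> \<le> cmod (A$i$j) * ?N" by (intro mult_left_mono sq_sum_bound) auto
    finally show "cmod (cnj (x$i) * A$i$j * x$j) \<le> cmod (A$i$j) * ?N" .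
  qed
  also have "\<dots> = (\<Sum>i\<in>UNIV. \<Sum>j\<in>UNIV. cmod (A$i$j)) * ?N"
    by (simp add: sum_distrib_right)
  finally show ?thesis .
qed

lemma psd_mat: "0 \<le> c \<Longrightarrow> psd (mat (of_real c) :: complex^'n^'n)"
  unfolding psd_bil using hermitian_mat
  by (simp add: bil_mat sum_cnj_self sum_nonneg)

lemma psd_shift:
  fixes H :: "complex^'n^'n"
  assumes "hermitian H"
  defines "c \<equiv> (\<Sum>i\<in>UNIV. \<Sum>j\<in>UNIV. cmod (H$i$j))"
  shows "psd (H + mat (of_real c))"
  unfolding psd_bil
proof (intro conjI allI)
  show "hermitian (H + mat (of_real c))" by (intro hermitian_add assms hermitian_mat)
  fix x :: "complex^'n"
  let ?N = "\<Sum>k\<in>UNIV. (cmod (x$k))^2"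
  have "- Re (bil H x x) \<le> cmod (bil H x x)" by (metis abs_Re_le_cmod abs_le_iff)
  also have "\<dots> \<le> c * ?N" using bil_bound[of H x] by (simp add: c_def)
  finally have "0 \<le> Re (bil H x x) + c * ?N" by simp
  then show "0 \<le> Re (bil (H + mat (of_real c)) x x)"
    by (simp add: bil_mat_add bil_mat sum_cnj_self)
qed

lemma herm_pres:
  fixes \<phi> :: "complex^'n^'n \<Rightarrow> complex^'n^'n"
  assumes lin: "Vector_Spaces.linear mscale mscale \<phi>" and pos: "positive_map \<phi>" and h: "hermitian H"
  shows "hermitian (\<phi> H)"
proof -
  interpret L: Vector_Spaces.linear mscale mscale \<phi> by (rule lin)
  define c where "c = (\<Sum>i\<in>UNIV. \<Sum>j\<in>UNIV. cmod (H$i$j))"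
  have c0: "0 \<le> c" by (simp add: c_def sum_nonneg)
  have p1: "psd (\<phi> (H + mat (of_real c)))" using pos psd_shift[OF h] unfolding positive_map_def c_def by blast
  have p2: "psd (\<phi> (mat (of_real c)))" using pos psd_mat[OF c0] unfolding positive_map_def by blast
  have "\<phi> H = \<phi> (H + mat (of_real c)) - \<phi> (mat (of_real c))" by (simp add: L.add)
  then show ?thesis using p1 p2 by (simp add: psd_def hermitian_diff)
qed

definition hre :: "complex^'n^'n \<Rightarrow> complex^'n^'n" where
  "hre X = (\<chi> i j. (X$i$j + cnj (X$j$i)) / 2)"
definition him :: "complex^'n^'n \<Rightarrow> complex^'n^'n" where
  "him X = (\<chi> i j. (X$i$j - cnj (X$j$i)) / (2 * \<i>))"

lemma hermitian_hre: "hermitian (hre X)"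
  by (intro hermitianI) (simp add: hre_def add.commute)
lemma hermitian_him: "hermitian (him X)"
  by (intro hermitianI) (simp add: him_def field_simps)
lemma hre_him: "X = hre X + mscale \<i> (him X)"
  unfolding hre_def him_def mscale_def
  by (rule vecI, rule vecI) (simp add: field_simps)

lemma herm_uniq:
  assumes "hermitian A" "hermitian B" "A + mscale \<i> B = 0"
  shows "A = 0"
proof (rule vecI, rule vecI)
  fix i j
  have "(A + mscale \<i> B)$i$j = 0" using assms(3) by simp
  then have e1: "A$i$j + \<i> * B$i$j = 0" by (simp add: mscale_def)
  have "(A + mscale \<i> B)$j$i = 0" using assms(3) by simp
  then have e2: "A$j$i + \<i> * B$j$i = 0" by (simp add: mscale_def)
  then have "cnj (A$j$i + \<i> * B$j$i) = 0" by simp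
  then have "cnj (A$j$i) - \<i> * cnj (B$j$i) = 0" by simp
  then have e3: "A$i$j - \<i> * B$i$j = 0"
    unfolding hermitianD[OF assms(1), of j i] hermitianD[OF assms(2), of j i] .
  from e1 e3 have "2 * A$i$j = 0" by (simp add: algebra_simps)
  then show "A$i$j = 0$i$j" by simp
qed

lemma scaleR_smult: "r *\<^sub>R (x::complex^'n) = of_real r *s x"
  by (rule vecI) (simp add: scaleR_vec_nth' del: vector_scaleR_component)

lemma bil_scaleR_vec: "bil A (r *\<^sub>R x) (r *\<^sub>R x) = of_real (r^2) * bil A x (x::complex^'n)"
  unfolding scaleR_smult bil_scale_left bil_scale_right by (simp add: power2_eq_square)

lemma cont_q: "continuous_on UNIV (\<lambda>x::complex^'n. Re (bil A x x))"
  unfolding bil_def by (intro continuous_intros)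

lemma psd_pos_def:
  fixes A :: "complex^'n^'n"
  assumes "psd A" "det A \<noteq> 0" "x \<noteq> 0"
  shows "0 < Re (bil A x x)"
proof -
  have "0 \<le> Re (bil A x x)" using assms(1) by (simp add: psd_bil)
  moreover have "Re (bil A x x) \<noteq> 0"
  proof
    assume "Re (bil A x x) = 0"
    then have "A *v x = 0" by (rule psd_kernel[OF assms(1)])
    moreover have "inj ((*v) A)" using assms(2) invertible_det_nz inj_matrix_vector_mult by blast
    ultimately show False using assms(3) by (metis injD matrix_vector_mult_0_right)
  qed
  ultimately show ?thesis by simp
qed

lemma trace_zero: "trace (0::complex^'n^'n) = 0" by (simp add: trace_def)

theorem mainTheorem6:
  fixes \<phi> :: "complex^'n^'n \<Rightarrow> complex^'n^'n"
  assumes "Vector_Spaces.linear mscale mscale \<phi>"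
    and "positive_map \<phi>"
    and "trace_preserving \<phi>"
    and "vector_space.dim mscale {X. \<phi> X = X} > 1"
  shows "\<exists>A. A \<noteq> 0 \<and> psd A \<and> det A = 0 \<and> \<phi> A = A"
proof -
  interpret L: Vector_Spaces.linear mscale mscale \<phi> by (rule assms(1))
  interpret V: vector_space mscale by (rule vector_space_mscale)
  have rlin: "linear \<phi>" by (rule real_linear[OF assms(1)])
  have pos: "psd A \<Longrightarrow> psd (\<phi> A)" for A using assms(2) unfolding positive_map_def by blast
  have tp: "trace (\<phi> A) = trace A" for A using assms(3) unfolding trace_preserving_def by blast
  have cont: "continuous_on S \<phi>" for S
    using rlin by (simp add: linear_conv_bounded_linear linear_continuous_on)
  obtain \<rho> where \<rho>D: "\<rho> \<in> dens" and \<rho>fix: "\<phi> \<rho> = \<rho>"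
  proof (rule brouwer[OF compact_dens convex_dens _ cont])
    show "dens \<noteq> {}" using dens_nonempty by blast
    show "\<phi> \<in> dens \<rightarrow> dens" using pos tp by (auto simp: dens_def)
  qed
  have \<rho>psd: "psd \<rho>" and \<rho>tr: "trace \<rho> = 1" using \<rho>D by (auto simp: dens_def)
  have \<rho>h: "hermitian \<rho>" using \<rho>psd by (simp add: psd_def)
  obtain X where Xfix: "\<phi> X = X" and Xns: "X \<notin> V.span {\<rho>}"
  proof -
    have "\<not> {X. \<phi> X = X} \<subseteq> V.span {\<rho>}"
    proof
      assume "{X. \<phi> X = X} \<subseteq> V.span {\<rho>}"
      then have "V.dim {X. \<phi> X = X} \<le> card {\<rho>}" by (rule V.dim_le_card) simp
      then show False using assms(4) by simp
    qed
    then show ?thesis using that by blast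
  qed
  define Hr where "Hr = hre X"
  define Hi where "Hi = him X"
  have Hrh: "hermitian Hr" and Hih: "hermitian Hi" by (simp_all add: Hr_def Hi_def hermitian_hre hermitian_him)
  have XH: "X = Hr + mscale \<i> Hi" unfolding Hr_def Hi_def by (rule hre_him)
  have "(\<phi> Hr - Hr) + mscale \<i> (\<phi> Hi - Hi) = \<phi> X - X"
  proof -
    have "\<phi> X = \<phi> Hr + mscale \<i> (\<phi> Hi)" by (subst XH) (simp add: L.add L.scale)
    then show ?thesis by (subst (2) XH) (simp add: mscale_def vec_eq_iff algebra_simps)
  qed
  then have eq0: "(\<phi> Hr - Hr) + mscale \<i> (\<phi> Hi - Hi) = 0" using Xfix by simp
  have h1: "hermitian (\<phi> Hr - Hr)" by (intro hermitian_diff herm_pres[OF assms(1,2)] Hrh)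
  have h2: "hermitian (\<phi> Hi - Hi)" by (intro hermitian_diff herm_pres[OF assms(1,2)] Hih)
  have Hrfix: "\<phi> Hr = Hr" using herm_uniq[OF h1 h2 eq0] by simp
  have "\<phi> Hi - Hi = 0"
  proof -
    have "\<phi> Hr - Hr = 0" using Hrfix by simp
    then have "mscale \<i> (\<phi> Hi - Hi) = 0" using eq0 by simp
    then have "mscale (- \<i>) (mscale \<i> (\<phi> Hi - Hi)) = 0" by (simp add: mscale_def vec_eq_iff)
    then show ?thesis by (simp add: mscale_def vec_eq_iff)
  qed
  then have Hifix: "\<phi> Hi = Hi" by simp
  obtain H where Hh: "hermitian H" and Hfix: "\<phi> H = H" and Hns: "H \<notin> V.span {\<rho>}"
  proof -
    have "Hr \<notin> V.span {\<rho>} \<or> Hi \<notin> V.span {\<rho>}"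
    proof (rule ccontr)
      assume "\<not> ?thesis"
      then have "Hr + mscale \<i> Hi \<in> V.span {\<rho>}" by (auto intro: V.span_add V.span_scale)
      then show False using Xns XH by simp
    qed
    then show ?thesis using that Hrh Hih Hrfix Hifix by blast
  qed
  define r where "r = Re (trace H)"
  have trH: "trace H = of_real r" unfolding r_def using trace_herm_real[OF Hh] by simp
  define G where "G = H - r *\<^sub>R \<rho>"
  have Gh: "hermitian G" unfolding G_def by (intro hermitian_diff hermitian_scaleR Hh \<rho>h)
  have Gfix: "\<phi> G = G" unfolding G_def using Hfix \<rho>fix by (simp add: linear_diff[OF rlin] linear_scale[OF rlin])
  have Gtr: "trace G = 0" unfolding G_def by (simp add: trace_diff trace_scaleR trH \<rho>tr)
  have Gnz: "G \<noteq> 0"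
  proof
    assume "G = 0"
    then have "H = mscale (of_real r) \<rho>" by (simp add: G_def scaleR_mscale)
    then have "H \<in> V.span {\<rho>}" by (auto intro: V.span_scale V.span_base)
    then show False using Hns by simp
  qed
  define f where "f t = \<rho> - t *\<^sub>R G" for t :: real
  have ftr: "trace (f t) = 1" for t by (simp add: f_def trace_diff trace_scaleR Gtr \<rho>tr)
  have ffix: "\<phi> (f t) = f t" for t
    using Gfix \<rho>fix by (simp add: f_def linear_diff[OF rlin] linear_scale[OF rlin])
  define S where "S = {t. 0 \<le> t \<and> f t \<in> dens}"
  have S0: "0 \<in> S" using \<rho>D by (simp add: S_def f_def)
  define B where "B = real CARD('n) * real CARD('n)"
  have Sbd: "t \<le> (norm \<rho> + B) / norm G" if "t \<in> S" for t
  proof -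
    have t0: "0 \<le> t" and fD: "f t \<in> dens" using that by (auto simp: S_def)
    have "t * norm G = norm (t *\<^sub>R G)" using t0 by simp
    also have "t *\<^sub>R G = \<rho> - f t" by (simp add: f_def)
    also have "norm (\<rho> - f t) \<le> norm \<rho> + norm (f t)" by (rule norm_triangle_ineq4)
    also have "norm (f t) \<le> B" unfolding B_def by (rule dens_norm_bound[OF fD])
    finally have "t * norm G \<le> norm \<rho> + B" by simp
    moreover have "0 < norm G" using Gnz by simp
    ultimately show ?thesis by (simp add: field_simps)
  qed
  have bdd: "bdd_above S" using Sbd by (rule bdd_aboveI)
  have fcont: "continuous_on UNIV f" unfolding f_def by (intro continuous_intros)
  have Sclosed: "closed S"
  proof -
    have "S = {0..} \<inter> f -` dens" by (auto simp: S_def)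
    moreover have "closed (f -` dens)" by (rule closed_vimage[OF closed_dens fcont])
    ultimately show ?thesis by (simp add: closed_Int)
  qed
  define ts where "ts = Sup S"
  have tsS: "ts \<in> S" unfolding ts_def using S0 bdd Sclosed by (intro closed_contains_Sup) auto
  define A where "A = f ts"
  have AD: "A \<in> dens" using tsS by (simp add: S_def A_def)
  have Apsd: "psd A" using AD by (simp add: dens_def)
  have Anz: "A \<noteq> 0" using ftr[of ts] by (auto simp: A_def trace_zero)
  have Afix: "\<phi> A = A" by (simp add: A_def ffix)
  have Adet: "det A = 0"
  proof (rule ccontr)
    assume dA: "det A \<noteq> 0"
    let ?K = "sphere (0::complex^'n) 1"
    have Kc: "compact ?K" by simp
    have Kne: "?K \<noteq> {}" by simp
    obtain xm where xm: "xm \<in> ?K" "\<And>y. y \<in> ?K \<Longrightarrow> Re (bil A xm xm) \<le> Re (bil A y y)"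
      using continuous_attains_inf[OF Kc Kne continuous_on_subset[OF cont_q subset_UNIV], of A] by blast
    obtain xM where xM: "xM \<in> ?K" "\<And>y. y \<in> ?K \<Longrightarrow> Re (bil G y y) \<le> Re (bil G xM xM)"
      using continuous_attains_sup[OF Kc Kne continuous_on_subset[OF cont_q subset_UNIV], of G] by blast
    define c where "c = Re (bil A xm xm)"
    have c0: "0 < c" unfolding c_def using xm(1) by (intro psd_pos_def[OF Apsd dA]) auto
    define M where "M = \<bar>Re (bil G xM xM)\<bar>"
    define e where "e = c / (M + 1)"
    have e0: "0 < e" using c0 by (simp add: e_def M_def)
    have eM: "e * M < c" using c0 by (simp add: e_def M_def field_simps)
    have onK: "0 \<le> Re (bil A y y) - e * Re (bil G y y)" if "y \<in> ?K" for y
    proof -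
      have "e * Re (bil G y y) \<le> e * M"
        using xM(2)[OF that] e0 by (intro mult_left_mono) (auto simp: M_def)
      moreover have "c \<le> Re (bil A y y)" using xm(2)[OF that] by (simp add: c_def)
      ultimately show ?thesis using eM by linarith
    qed
    have psdE: "psd (A - e *\<^sub>R G)"
      unfolding psd_bil
    proof (intro conjI allI)
      show "hermitian (A - e *\<^sub>R G)" using Apsd Gh by (intro hermitian_diff hermitian_scaleR) (auto simp: psd_def)
      fix x :: "complex^'n"
      show "0 \<le> Re (bil (A - e *\<^sub>R G) x x)"
      proof (cases "x = 0")
        case True then show ?thesis by (simp add: bil_def)
      next
        case False
        define u where "u = (1 / norm x) *\<^sub>R x"
        have uK: "u \<in> ?K" using False by (simp add: u_def)
        have xu: "x = norm x *\<^sub>R u" using False by (simp add: u_def)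
        have "Re (bil (A - e *\<^sub>R G) x x) = (norm x)^2 * (Re (bil A u u) - e * Re (bil G u u))"
          by (subst (1 2) xu) (simp add: bil_scaleR_vec bil_mat_diff bil_mat_scaleR algebra_simps)
        also have "0 \<le> \<dots>" using onK[OF uK] by simp
        finally show ?thesis by simp
      qed
    qed
    have "f (ts + e) = A - e *\<^sub>R G" by (simp add: A_def f_def algebra_simps scaleR_add_left)
    then have "ts + e \<in> S" using psdE ftr[of "ts + e"] tsS e0 by (auto simp: S_def dens_def)
    then have "ts + e \<le> ts" unfolding ts_def using bdd by (rule cSup_upper)
    then show False using e0 by simp
  qed
  show ?thesis using Anz Apsd Adet Afix by blast
qed

end
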